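(* Let $(Q,\cdot)$ be a quasigroup satisfying $x(y(zz))=(x(yz))z$ for all $x,y,z\in Q$ (an LG1-quasigroup). Then $Q$ satisfies each of the following identities for all $x,y,z\in Q$: (1) $x(y(zy))=(x(yz))y$ (LG3); (2) $x(y(yz))=(x(yy))z$ (LC4); (3) $x(y(xz))=(x(yx))z$ (left Bol).
   Context: A quasigroup is a set $Q$ with a binary operation $\cdot$ (written as juxtaposition) such that for all $a,b\in Q$ each of the equations $ax=b$ and $ya=b$ has a unique solution in $Q$. *)

theory Defs
  imports Main
begin

definition quasigroup :: "'a set \<Rightarrow> ('a \<Rightarrow> 'a \<Rightarrow> 'a) \<Rightarrow> bool" where
  "quasigroup Q m \<longleftrightarrow>
     (\<forall>a\<in>Q. \<forall>b\<in>Q. m a b \<in> Q) \<and>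
     (\<forall>a\<in>Q. \<forall>b\<in>Q. \<exists>!x. x \<in> Q \<and> m a x = b) \<and>
     (\<forall>a\<in>Q. \<forall>b\<in>Q. \<exists>!y. y \<in> Q \<and> m y a = b)"

end

theory Submission
  imports Defs
begin

theorem mainTheorem7:
  fixes Q :: "'a set" and m :: "'a \<Rightarrow> 'a \<Rightarrow> 'a"
  assumes "quasigroup Q m"
    and LG1: "\<forall>x\<in>Q. \<forall>y\<in>Q. \<forall>z\<in>Q. m x (m y (m z z)) = m (m x (m y z)) z"
  shows "(\<forall>x\<in>Q. \<forall>y\<in>Q. \<forall>z\<in>Q. m x (m y (m z y)) = m (m x (m y z)) y)
       \<and> (\<forall>x\<in>Q. \<forall>y\<in>Q. \<forall>z\<in>Q. m x (m y (m y z)) = m (m x (m y y)) z)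
       \<and> (\<forall>x\<in>Q. \<forall>y\<in>Q. \<forall>z\<in>Q. m x (m y (m x z)) = m (m x (m y x)) z)"
proof (cases "Q = {}")
  case True
  then show ?thesis by simp
next
  case False
  then obtain z0 where z0: "z0 \<in> Q" by blast
  have cl: "\<And>a b. a \<in> Q \<Longrightarrow> b \<in> Q \<Longrightarrow> m a b \<in> Q"
    using assms(1) unfolding quasigroup_def by blast
  have U1: "\<forall>a\<in>Q. \<forall>b\<in>Q. \<exists>!x. x \<in> Q \<and> m a x = b" using assms(1) unfolding quasigroup_def by (rule conjE) (erule conjE)
  have U2: "\<forall>a\<in>Q. \<forall>b\<in>Q. \<exists>!y. y \<in> Q \<and> m y a = b" using assms(1) unfolding quasigroup_def by (rule conjE) (erule conjE)
  have lc: "\<And>a x y. a \<in> Q \<Longrightarrow> x \<in> Q \<Longrightarrow> y \<in> Q \<Longrightarrow> m a x = m a y \<Longrightarrow> x = y"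
  proof -
    fix a x y assume h: "a \<in> Q" "x \<in> Q" "y \<in> Q" "m a x = m a y"
    have "\<exists>!u. u \<in> Q \<and> m a u = m a x" using bspec[OF bspec[OF U1 h(1)] cl[OF h(1) h(2)]] .
    then show "x = y" using h by (metis (no_types, lifting))
  qed
  have rc: "\<And>a x y. a \<in> Q \<Longrightarrow> x \<in> Q \<Longrightarrow> y \<in> Q \<Longrightarrow> m x a = m y a \<Longrightarrow> x = y"
  proof -
    fix a x y assume h: "a \<in> Q" "x \<in> Q" "y \<in> Q" "m x a = m y a"
    have "\<exists>!u. u \<in> Q \<and> m u a = m x a" using bspec[OF bspec[OF U2 h(1)] cl[OF h(2) h(1)]] .
    then show "x = y" using h by (metis (no_types, lifting))
  qed
  have ldx: "\<And>a b. a \<in> Q \<Longrightarrow> b \<in> Q \<Longrightarrow> \<exists>u\<in>Q. m a u = b"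
  proof -
    fix a b assume "a \<in> Q" "b \<in> Q"
    then have "\<exists>!x. x \<in> Q \<and> m a x = b" using U1 by blast
    then show "\<exists>u\<in>Q. m a u = b" by blast
  qed
  have rdx: "\<And>a b. a \<in> Q \<Longrightarrow> b \<in> Q \<Longrightarrow> \<exists>u\<in>Q. m u a = b"
  proof -
    fix a b assume "a \<in> Q" "b \<in> Q"
    then have "\<exists>!x. x \<in> Q \<and> m x a = b" using U2 by blast
    then show "\<exists>u\<in>Q. m u a = b" by blast
  qed
  have L: "\<And>x y z. x \<in> Q \<Longrightarrow> y \<in> Q \<Longrightarrow> z \<in> Q \<Longrightarrow> m x (m y (m z z)) = m (m x (m y z)) z"
    using LG1 by blast
  obtain y0 where y0: "y0 \<in> Q" "m y0 (m z0 z0) = z0" using rdx[of "m z0 z0" z0] cl z0 by blast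
  define e where "e = m y0 z0"
  have eQ: "e \<in> Q" unfolding e_def using cl y0 z0 by blast
  have re: "\<And>x. x \<in> Q \<Longrightarrow> m x e = x"
  proof -
    fix x assume x: "x \<in> Q"
    have "m x z0 = m (m x e) z0" using L[OF x y0(1) z0] y0(2) unfolding e_def by simp
    then show "m x e = x" using rc[OF z0 cl[OF x eQ] x] by simp
  qed
  have Comp: "\<And>a b x. a \<in> Q \<Longrightarrow> b \<in> Q \<Longrightarrow> x \<in> Q \<Longrightarrow> \<exists>c\<in>Q. m e c = m (m e a) b \<and> m (m x a) b = m x c"
  proof -
    fix a b x assume h: "a \<in> Q" "b \<in> Q" "x \<in> Q"
    obtain y where y: "y \<in> Q" "m y b = a" using rdx[OF h(2) h(1)] by blast
    have c: "m y (m b b) \<in> Q" using cl y h by blast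
    have e1: "m e (m y (m b b)) = m (m e a) b" using L[OF eQ y(1) h(2)] y(2) by simp
    have e2: "m (m x a) b = m x (m y (m b b))" using L[OF h(3) y(1) h(2)] y(2) by simp
    show "\<exists>c\<in>Q. m e c = m (m e a) b \<and> m (m x a) b = m x c"
      using c e1 e2 by blast
  qed
  have K1: "\<And>x z w. x \<in> Q \<Longrightarrow> z \<in> Q \<Longrightarrow> w \<in> Q \<Longrightarrow> m e w = z \<Longrightarrow> m x (m z z) = m (m x z) w"
  proof -
    fix x z w' assume h: "x \<in> Q" "z \<in> Q" "w' \<in> Q" "m e w' = z"
    obtain y where y: "y \<in> Q" "m y z = e" using rdx[OF h(2) eQ] by blast
    obtain w where w: "w \<in> Q" "m e w = y" using ldx[OF eQ y(1)] by blast
    have yzz: "m y (m z z) = z"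
    proof -
      have "m e z = m e (m y (m z z))" using L[OF eQ y(1) h(2)] y(2) re eQ by simp
      then show ?thesis using lc[OF eQ h(2) cl[OF y(1) cl[OF h(2) h(2)]]] by simp
    qed
    have i: "\<And>s. s \<in> Q \<Longrightarrow> m (m s w) z = s"
    proof -
      fix s assume s: "s \<in> Q"
      obtain c where c: "c \<in> Q" "m e c = m (m e w) z" "m (m s w) z = m s c"
        using Comp[OF w(1) h(2) s] by blast
      have "m e c = m e e" using c(2) w(2) y(2) re eQ by simp
      then have "c = e" using lc[OF eQ c(1) eQ] by blast
      then show "m (m s w) z = s" using c(3) re s by simp
    qed
    have ii: "\<And>s. s \<in> Q \<Longrightarrow> m (m s w) (m z z) = m s w'"
    proof -
      fix s assume s: "s \<in> Q"
      obtain c where c: "c \<in> Q" "m e c = m (m e w) (m z z)" "m (m s w) (m z z) = m s c"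
        using Comp[OF w(1) cl[OF h(2) h(2)] s] by blast
      have "m e c = m e w'" using c(2) w(2) yzz h(4) by simp
      then have "c = w'" using lc[OF eQ c(1) h(3)] by blast
      then show "m (m s w) (m z z) = m s w'" using c(3) by simp
    qed
    have xz: "m x z \<in> Q" using cl h by blast
    have "m (m (m x z) w) z = m x z" using i[OF xz] .
    then have "m (m x z) w = x" using rc[OF h(2) cl[OF xz w(1)] h(1)] by blast
    then show "m x (m z z) = m (m x z) w'" using ii[OF xz] by simp
  qed
  have H: "\<And>x a c. x \<in> Q \<Longrightarrow> a \<in> Q \<Longrightarrow> c \<in> Q \<Longrightarrow> m (m x a) (m e c) = m x (m a c)"
  proof -
    fix x a c assume h: "x \<in> Q" "a \<in> Q" "c \<in> Q"
    define z where "z = m e c"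
    have zQ: "z \<in> Q" unfolding z_def using cl eQ h by blast
    obtain y where y: "y \<in> Q" "m y z = a" using rdx[OF zQ h(2)] by blast
    have "m y (m z z) = m (m y z) c" using K1[OF y(1) zQ h(3)] z_def by simp
    then show "m (m x a) (m e c) = m x (m a c)"
      using L[OF h(1) y(1) zQ] y(2) z_def by simp
  qed
  have E: "\<And>z. z \<in> Q \<Longrightarrow> m e (m e z) = z"
  proof -
    fix z assume z: "z \<in> Q"
    obtain w where w: "w \<in> Q" "m e w = z" using ldx[OF eQ z] by blast
    have "m e (m z z) = m (m e z) w" using K1[OF eQ z w] .
    moreover have "m e (m z z) = m (m e z) (m e z)" using H[OF eQ z z] by simp
    ultimately have "w = m e z" using lc[OF cl[OF eQ z] w(1) cl[OF eQ z]] by simp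
    then show "m e (m e z) = z" using w(2) by simp
  qed
  have G: "\<And>x a b z. x \<in> Q \<Longrightarrow> a \<in> Q \<Longrightarrow> b \<in> Q \<Longrightarrow> z \<in> Q \<Longrightarrow>
      m (m x (m a b)) z = m x (m a (m b z))"
  proof -
    fix x a b z assume h: "x \<in> Q" "a \<in> Q" "b \<in> Q" "z \<in> Q"
    define c where "c = m e z"
    have cQ: "c \<in> Q" unfolding c_def using cl eQ h by blast
    have "m (m x (m a b)) z = m (m x (m a b)) (m e c)" using E[OF h(4)] c_def by simp
    also have "\<dots> = m x (m (m a b) c)" using H[OF h(1) cl[OF h(2) h(3)] cQ] .
    also have "m (m a b) c = m (m a b) (m e (m e c))" using E[OF cQ] by simp
    also have "\<dots> = m a (m b (m e c))" using H[OF h(2) h(3) cl[OF eQ cQ]] .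
    also have "m e c = z" using E[OF h(4)] c_def by simp
    finally show "m (m x (m a b)) z = m x (m a (m b z))" .
  qed
  show ?thesis using G by simp
qed

end
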